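(* Let $N$ be a positive integer. For every integer $n\ge 1$, $$B_{N,n}=n!\sum_{\substack{t_1+2t_2+\cdots+nt_n=n\\ t_1,\dots,t_n\ge 0}}\frac{(t_1+\cdots+t_n)!}{t_1!\cdots t_n!}(-1)^{t_1+\cdots+t_n}\left(\frac{N!}{(N+1)!}\right)^{t_1}\left(\frac{N!}{(N+2)!}\right)^{t_2}\cdots\left(\frac{N!}{(N+n)!}\right)^{t_n},$$ and $$\frac{N!}{(N+n)!}=\det(d_{ij})_{1\le i,j\le n},$$ where $d_{ij}=(-1)^{i-j+1}\dfrac{B_{N,i-j+1}}{(i-j+1)!}$ if $j\le i$, $d_{ij}=1$ if $j=i+1$, and $d_{ij}=0$ if $j>i+1$.
   Context: For a positive integer $N$, the hypergeometric Bernoulli numbers $B_{N,n}$ ($n\ge 0$) are defined by $$\frac{x^N/N!}{e^x-\sum_{n=0}^{N-1}x^n/n!}=\sum_{n=0}^\infty B_{N,n}\frac{x^n}{n!}.$$ *)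

theory Defs
  imports "HOL-Computational_Algebra.Formal_Power_Series" "Jordan_Normal_Form.Determinant"
begin

definition hbern_fps :: "nat \<Rightarrow> real fps" where
  "hbern_fps N = (fps_const (1 / fact N) * fps_X ^ N) /
     (fps_exp 1 - (\<Sum>k<N. fps_const (1 / fact k) * fps_X ^ k))"

definition hbern :: "nat \<Rightarrow> nat \<Rightarrow> real" where
  "hbern N n = fact n * fps_nth (hbern_fps N) n"

definition weighted_compositions :: "nat \<Rightarrow> (nat \<Rightarrow> nat) set" where
  "weighted_compositions n =
     {t. (\<forall>i. i \<notin> {1..n} \<longrightarrow> t i = 0) \<and> (\<Sum>i=1..n. i * t i) = n}"

end

theory Submission
  imports Defs
begin


definition aa :: "nat \<Rightarrow> nat \<Rightarrow> real" where
  "aa N m = fact N / fact (N + m)"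

lemma denom_eq:
  "fps_exp 1 - (\<Sum>k<N. fps_const (1 / fact k) * fps_X ^ k) =
   (fps_const (1 / fact N) * fps_X ^ N) * Abs_fps (aa N)"
proof (rule fps_ext)
  fix m
  have s: "fps_nth (\<Sum>k<N. fps_const (1 / fact k) * fps_X ^ k :: real fps) m = (if m < N then 1 / fact m else 0)"
    by (simp add: fps_sum_nth if_distrib[where f="\<lambda>x. x / _"] sum.delta cong: if_cong)
  have r: "fps_nth ((fps_const (1 / fact N) * fps_X ^ N) * Abs_fps (aa N)) m = (if m < N then 0 else 1 / fact m)"
    by (simp add: mult.assoc fps_X_power_mult_nth aa_def)
  show "fps_nth (fps_exp 1 - (\<Sum>k<N. fps_const (1 / fact k) * fps_X ^ k)) m =
   fps_nth ((fps_const (1 / fact N) * fps_X ^ N) * Abs_fps (aa N)) m"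
    using s r by simp
qed

lemma hbern_fps_eq: "hbern_fps N = inverse (Abs_fps (aa N))"
proof -
  have P: "(fps_const (1 / fact N) * fps_X ^ N :: real fps) \<noteq> 0"
    by simp
  have "hbern_fps N = ((fps_const (1 / fact N) * fps_X ^ N) * 1) / ((fps_const (1 / fact N) * fps_X ^ N) * Abs_fps (aa N))"
    unfolding hbern_fps_def denom_eq by simp
  also have "\<dots> = 1 / Abs_fps (aa N)" using P by (rule div_mult_mult1)
  also have "\<dots> = inverse (Abs_fps (aa N))" by (subst fps_divide_unit) (auto simp: aa_def)
  finally show ?thesis .
qed

lemma g_times_A: "hbern_fps N * Abs_fps (aa N) = 1"
  unfolding hbern_fps_eq by (rule inverse_mult_eq_1) (auto simp: aa_def)

lemma g0: "fps_nth (hbern_fps N) 0 = 1"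
  unfolding hbern_fps_eq by (simp add: aa_def)

lemma recur: "m \<ge> 1 \<Longrightarrow> (\<Sum>i=0..m. aa N i * fps_nth (hbern_fps N) (m - i)) = 0"
  using arg_cong[OF g_times_A[of N], of "\<lambda>f. fps_nth f m"] by (simp add: fps_mult_nth mult.commute[of "hbern_fps N"])



lemma hess_det:
  fixes b a :: "nat \<Rightarrow> real"
  assumes b0: "b 0 = 1" and a0: "a 0 = 1"
    and rec: "\<And>m. m \<ge> 1 \<Longrightarrow> (\<Sum>k\<le>m. b (m-k) * a k) = 0" and n: "n \<ge> 1"
  shows "det (mat n n (\<lambda>(i,j). if j \<le> i then (-1)^(i-j+1) * b (i-j+1) else if j = i+1 then 1 else 0)) = a n"
proof -
  define H where "H = mat n n (\<lambda>(i,j). if j \<le> i then (-1)^(i-j+1) * b (i-j+1) else if j = i+1 then 1 else (0::real))"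
  define U where "U = mat n n (\<lambda>(i,j). if j = 0 then (-1)^i * a i else if i = j then 1 else (0::real))"
  have H: "H \<in> carrier_mat n n" and U: "U \<in> carrier_mat n n" unfolding H_def U_def by auto
  have detU: "det U = 1"
  proof -
    have "det U = prod_list (diag_mat U)"
      by (rule det_lower_triangular[OF _ U]) (auto simp: U_def)
    also have "\<dots> = 1" unfolding prod_list_diag_prod using a0 by (auto simp: U_def intro!: prod.neutral)
    finally show ?thesis .
  qed
  define K where "K = H * U"
  have K: "K \<in> carrier_mat n n" unfolding K_def using H U by auto
  have detK: "det K = det H" unfolding K_def using det_mult[OF H U] detU by simp
  have Kj: "K $$ (i,j) = H $$ (i,j)" if "i < n" "j < n" "j \<ge> 1" for i j
  proof -
    have "K $$ (i,j) = (\<Sum>k<n. H $$ (i,k) * U $$ (k,j))"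
      using that H U unfolding K_def by (simp add: scalar_prod_def atLeast0LessThan)
    also have "\<dots> = (\<Sum>k<n. if k = j then H $$ (i,k) else 0)"
      using that by (intro sum.cong) (auto simp: U_def)
    also have "\<dots> = H $$ (i,j)" using that by simp
    finally show ?thesis .
  qed
  have K0: "K $$ (i,0) = (if i = n - 1 then (-1)^(n+1) * a n else 0)" if "i < n" for i
  proof -
    have "K $$ (i,0) = (\<Sum>k<n. H $$ (i,k) * ((-1)^k * a k))"
      using that H U n unfolding K_def by (simp add: scalar_prod_def atLeast0LessThan U_def)
    also have "\<dots> = (\<Sum>k<n. if k \<le> i then (-1)^(i+1) * (b (i+1-k) * a k) else if k = i+1 then (-1)^(i+1) * a (i+1) else 0)"
    proof (intro sum.cong refl)
      fix k assume k: "k \<in> {..<n}"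
      show "H $$ (i,k) * ((-1)^k * a k) = (if k \<le> i then (-1)^(i+1) * (b (i+1-k) * a k) else if k = i+1 then (-1)^(i+1) * a (i+1) else 0)"
      proof (cases "k \<le> i")
        case True
        have "(-1::real)^(i-k+1) * (-1)^k = (-1)^(i+1)"
          using True by (simp flip: power_add)
        then show ?thesis using True k that
          by (simp add: H_def Suc_diff_le)
      qed (use k that in \<open>auto simp: H_def\<close>)
    qed
    also have "\<dots> = (\<Sum>k\<le>i. (-1)^(i+1) * (b (i+1-k) * a k)) + (if i + 1 < n then (-1)^(i+1) * a (i+1) else 0)"
    proof -
      have split: "{..<n} = {..i} \<union> {i+1..<n}" using that by auto
      have "(\<Sum>k<n. if k \<le> i then (-1)^(i+1) * (b (i+1-k) * a k) else if k = i+1 then (-1)^(i+1) * a (i+1) else (0::real))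
        = (\<Sum>k\<le>i. if k \<le> i then (-1)^(i+1) * (b (i+1-k) * a k) else if k = i+1 then (-1)^(i+1) * a (i+1) else 0)
        + (\<Sum>k\<in>{i+1..<n}. if k \<le> i then (-1)^(i+1) * (b (i+1-k) * a k) else if k = i+1 then (-1)^(i+1) * a (i+1) else 0)"
        unfolding split by (rule sum.union_disjoint) auto
      also have "(\<Sum>k\<in>{i+1..<n}. if k \<le> i then (-1)^(i+1) * (b (i+1-k) * a k) else if k = i+1 then (-1)^(i+1) * a (i+1) else (0::real))
          = (\<Sum>k\<in>{i+1..<n}. if k = i+1 then (-1)^(i+1) * a (i+1) else 0)"
        by (intro sum.cong) auto
      also have "\<dots> = (if i + 1 < n then (-1)^(i+1) * a (i+1) else 0)"
        by (simp add: sum.delta)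
      finally show ?thesis by simp
    qed
    also have "\<dots> = (if i = n - 1 then (-1)^(n+1) * a n else 0)"
    proof -
      have R: "(\<Sum>k\<le>i. b (i+1-k) * a k) + a (i+1) = 0"
        using rec[of "i+1"] b0 by (simp add: atMost_Suc)
      show ?thesis
      proof (cases "i + 1 < n")
        case True
        then have "i \<noteq> n - 1" by auto
        have "(\<Sum>k\<le>i. (-1)^(i+1) * (b (i+1-k) * a k)) + (-1)^(i+1) * a (i+1)
            = (-1::real)^(i+1) * ((\<Sum>k\<le>i. b (i+1-k) * a k) + a (i+1))"
          by (simp add: sum_distrib_left distrib_left)
        then show ?thesis using True R \<open>i \<noteq> n - 1\<close> by simp
      next
        case False
        then have i: "i = n - 1" "i + 1 = n" using that by auto
        have "(\<Sum>k\<le>i. (-1)^(i+1) * (b (i+1-k) * a k)) = (-1)^n * (- a n)"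
        proof -
          have "(\<Sum>k\<le>i. (-1)^(i+1) * (b (i+1-k) * a k)) = (-1::real)^(i+1) * (\<Sum>k\<le>i. b (i+1-k) * a k)"
            by (simp add: sum_distrib_left)
          also have "(\<Sum>k\<le>i. b (i+1-k) * a k) = - a (i+1)" using R by (simp add: eq_neg_iff_add_eq_0)
          finally show ?thesis using i by simp
        qed
        then show ?thesis using i False by simp
      qed
    qed
    finally show ?thesis .
  qed
  have "det K = (\<Sum>i<n. K $$ (i,0) * cofactor K i 0)"
    by (rule laplace_expansion_column[OF K]) (use n in auto)
  also have "\<dots> = (\<Sum>i<n. if i = n - 1 then (-1)^(n+1) * a n * cofactor K (n-1) 0 else 0)"
    by (intro sum.cong) (auto simp: K0)
  also have "\<dots> = (-1)^(n+1) * a n * cofactor K (n-1) 0"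
    using n by (simp add: sum.delta)
  also have "cofactor K (n-1) 0 = (-1)^(n-1) * det (mat_delete K (n-1) 0)"
    by (simp add: cofactor_def)
  also have "det (mat_delete K (n-1) 0) = 1"
  proof -
    have M: "mat_delete K (n-1) 0 \<in> carrier_mat (n-1) (n-1)"
      using mat_delete_carrier[OF K] .
    have ent: "mat_delete K (n-1) 0 $$ (i,j) = H $$ (i, j+1)" if "i < n - 1" "j < n - 1" for i j
      using that K Kj[of i "j+1"] by (simp add: mat_delete_def)
    have "det (mat_delete K (n-1) 0) = prod_list (diag_mat (mat_delete K (n-1) 0))"
    proof (rule det_lower_triangular[OF _ M])
      fix i j assume "i < j" "j < n - 1"
      then show "mat_delete K (n-1) 0 $$ (i,j) = 0" using ent[of i j] by (simp add: H_def)
    qed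
    also have "\<dots> = 1" unfolding prod_list_diag_prod using M
    proof (intro prod.neutral ballI)
      fix x assume "x \<in> {0..<dim_row (mat_delete K (n-1) 0)}"
      then have "x < n - 1" using M by auto
      then show "mat_delete K (n-1) 0 $$ (x, x) = 1" using ent[of x x] by (simp add: H_def)
    qed
    finally show ?thesis .
  qed
  finally have "det K = (-1)^(n+1) * a n * (-1)^(n-1)" by simp
  also have "\<dots> = a n * ((-1)^(n+1) * (-1)^(n-1))" by simp
  also have "(-1::real)^(n+1) * (-1)^(n-1) = 1"
  proof -
    have "(-1::real)^(n+1) * (-1)^(n-1) = (-1)^(2*n)" using n by (simp flip: power_add)
    then show ?thesis by (simp add: power_mult)
  qed
  finally show ?thesis using detK unfolding H_def by simp
qed



definition WCb :: "nat \<Rightarrow> nat \<Rightarrow> (nat \<Rightarrow> nat) set" where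
  "WCb M n = {t. (\<forall>i. i \<notin> {1..M} \<longrightarrow> t i = 0) \<and> (\<Sum>i=1..M. i * t i) = n}"

definition FF :: "(nat \<Rightarrow> real) \<Rightarrow> nat \<Rightarrow> (nat \<Rightarrow> nat) \<Rightarrow> real" where
  "FF a M t = fact (\<Sum>i=1..M. t i) / (\<Prod>i=1..M. fact (t i)) * (-1) ^ (\<Sum>i=1..M. t i) * (\<Prod>i=1..M. a i ^ t i)"

lemma WCb_le: assumes "t \<in> WCb M n" "i \<in> {1..M}" shows "i * t i \<le> n"
proof -
  have "i * t i \<le> (\<Sum>i=1..M. i * t i)" using assms(2) by (intro member_le_sum) auto
  then show ?thesis using assms(1) by (simp add: WCb_def)
qed

lemma WCb_eq: assumes "n \<le> M" shows "WCb M n = weighted_compositions n"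
proof (intro equalityI subsetI)
  fix t assume t: "t \<in> WCb M n"
  have z: "t i = 0" if "i \<notin> {1..n}" for i
  proof (cases "i \<in> {1..M}")
    case True
    with that have "i > n" by auto
    moreover have "i * t i \<le> n" using WCb_le[OF t True] .
    ultimately show ?thesis by (cases "t i") auto
  next
    case False then show ?thesis using t by (auto simp: WCb_def)
  qed
  have "(\<Sum>i=1..n. i * t i) = (\<Sum>i=1..M. i * t i)"
    using assms z by (intro sum.mono_neutral_left) auto
  then show "t \<in> weighted_compositions n" using t z by (auto simp: WCb_def weighted_compositions_def)
next
  fix t assume t: "t \<in> weighted_compositions n"
  then have z: "t i = 0" if "i \<notin> {1..n}" for i using that by (auto simp: weighted_compositions_def)
  have "(\<Sum>i=1..n. i * t i) = (\<Sum>i=1..M. i * t i)"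
    using assms z by (intro sum.mono_neutral_left) auto
  then show "t \<in> WCb M n" using t z assms by (auto simp: WCb_def weighted_compositions_def)
qed

lemma FF_eq: assumes "\<And>i. i \<notin> {1..n} \<Longrightarrow> t i = 0" "n \<le> M" shows "FF a M t = FF a n t"
proof -
  have 1: "(\<Sum>i=1..n. t i) = (\<Sum>i=1..M. t i)"
    using assms by (intro sum.mono_neutral_left) auto
  have 2: "(\<Prod>i=1..n. fact (t i) :: real) = (\<Prod>i=1..M. fact (t i))"
    using assms by (intro prod.mono_neutral_left) auto
  have 3: "(\<Prod>i=1..n. a i ^ t i) = (\<Prod>i=1..M. a i ^ t i)"
    using assms by (intro prod.mono_neutral_left) auto
  show ?thesis unfolding FF_def 1 2 3 ..
qed

lemma WCb_finite: "finite (WCb M n)"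
proof -
  have "WCb M n \<subseteq> {f. \<forall>x. (x \<in> {1..M} \<longrightarrow> f x \<in> {0..n}) \<and> (x \<notin> {1..M} \<longrightarrow> f x = 0)}"
  proof safe
    fix t x assume t: "t \<in> WCb M n" and x: "x \<in> {1..M}"
    have "t x \<le> x * t x" using x by (cases x) auto
    then have "t x \<le> n" using WCb_le[OF t x] by (rule le_trans)
    then show "t x \<in> {0..n}" by simp
  qed (auto simp: WCb_def)
  moreover have "finite {f. \<forall>x. (x \<in> {1..M} \<longrightarrow> f x \<in> {0..n}) \<and> (x \<notin> {1..M} \<longrightarrow> f x = (0::nat))}"
    by (rule finite_set_of_finite_funs) auto
  ultimately show ?thesis by (rule finite_subset)
qed

lemma sum_upd:
  fixes g :: "nat \<Rightarrow> nat \<Rightarrow> 'b::comm_monoid_add"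
  assumes "finite S" "m \<in> S"
  shows "(\<Sum>i\<in>S. g i ((t(m:=x)) i)) + g m (t m) = (\<Sum>i\<in>S. g i (t i)) + g m x"
proof -
  have R: "(\<Sum>i\<in>S-{m}. g i ((t(m:=x)) i)) = (\<Sum>i\<in>S-{m}. g i (t i))" by (intro sum.cong) auto
  show ?thesis using sum.remove[OF assms, of "\<lambda>i. g i ((t(m:=x)) i)"] sum.remove[OF assms, of "\<lambda>i. g i (t i)"] R
    by (simp add: ac_simps)
qed

lemma prod_upd:
  fixes g :: "nat \<Rightarrow> nat \<Rightarrow> 'b::comm_monoid_mult"
  assumes "finite S" "m \<in> S"
  shows "(\<Prod>i\<in>S. g i ((t(m:=x)) i)) * g m (t m) = (\<Prod>i\<in>S. g i (t i)) * g m x"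
proof -
  have R: "(\<Prod>i\<in>S-{m}. g i ((t(m:=x)) i)) = (\<Prod>i\<in>S-{m}. g i (t i))" by (intro prod.cong) auto
  show ?thesis using prod.remove[OF assms, of "\<lambda>i. g i ((t(m:=x)) i)"] prod.remove[OF assms, of "\<lambda>i. g i (t i)"] R
    by (simp add: ac_simps)
qed



lemma FF_step:
  assumes t: "t \<in> WCb M n" and n: "n \<ge> 1"
  shows "FF a M t = - (\<Sum>m=1..M. if t m \<ge> 1 then a m * FF a M (t(m := t m - 1)) else 0)"
proof -
  define k where "k = (\<Sum>i=1..M. t i)"
  define P where "P = (\<Prod>i=1..M. fact (t i) :: real)"
  define A where "A = (\<Prod>i=1..M. a i ^ t i)"
  define Q where "Q = fact (k - 1) * (-1) ^ (k - 1) * A / P"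
  have Ppos: "P > 0" unfolding P_def by (intro prod_pos) auto
  have k: "k \<ge> 1"
  proof (rule ccontr)
    assume "\<not> k \<ge> 1"
    then have "k = 0" by simp
    then have "\<forall>i\<in>{1..M}. t i = 0" unfolding k_def by simp
    then have "(\<Sum>i=1..M. i * t i) = 0" by simp
    then show False using t n by (simp add: WCb_def)
  qed
  have trm: "(if t m \<ge> 1 then a m * FF a M (t(m := t m - 1)) else 0) = real (t m) * Q"
    if m: "m \<in> {1..M}" for m
  proof (cases "t m \<ge> 1")
    case True
    define s where "s = t(m := t m - 1)"
    have ks: "(\<Sum>i=1..M. s i) + t m = k + (t m - 1)"
      unfolding s_def k_def by (rule sum_upd[where g="\<lambda>i x. x"]) (use m in auto)
    then have ks': "(\<Sum>i=1..M. s i) = k - 1" using True by linarith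
    have Ps: "(\<Prod>i=1..M. fact (s i) :: real) * fact (t m) = P * fact (t m - 1)"
      unfolding s_def P_def by (rule prod_upd[where g="\<lambda>i x. fact x"]) (use m in auto)
    have Ps': "P = real (t m) * (\<Prod>i=1..M. fact (s i) :: real)"
    proof -
      have "fact (t m) = (of_nat (t m) * fact (t m - 1) :: real)"
        by (rule fact_reduce) (use True in auto)
      then show ?thesis using Ps by (simp add: ac_simps)
    qed
    have As: "(\<Prod>i=1..M. a i ^ s i) * a m ^ t m = A * a m ^ (t m - 1)"
      unfolding s_def A_def by (rule prod_upd[where g="\<lambda>i x. a i ^ x"]) (use m in auto)
    have As': "A = a m * (\<Prod>i=1..M. a i ^ s i)"
    proof -
      obtain j where j: "t m = Suc j" using True by (cases "t m") auto
      have "a m ^ t m = a m * a m ^ (t m - 1)" unfolding j by simp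
      then have "(a m * (\<Prod>i=1..M. a i ^ s i)) * a m ^ (t m - 1) = A * a m ^ (t m - 1)"
        using As by (simp add: ac_simps)
      then show ?thesis
        by (cases "a m = 0") (use True m in \<open>auto simp: A_def\<close>)
    qed
    have Psp: "(\<Prod>i=1..M. fact (s i) :: real) > 0" by (intro prod_pos) auto
    have "a m * FF a M s = fact (k - 1) * (-1) ^ (k - 1) * (a m * (\<Prod>i=1..M. a i ^ s i)) / (\<Prod>i=1..M. fact (s i))"
      unfolding FF_def ks' by simp
    also have "\<dots> = real (t m) * Q"
      unfolding Q_def As'[symmetric] Ps' using True Psp by (simp add: field_simps)
    finally show ?thesis using True by (simp add: s_def)
  next
    case False then show ?thesis by simp
  qed
  have "(\<Sum>m=1..M. if t m \<ge> 1 then a m * FF a M (t(m := t m - 1)) else 0) = (\<Sum>m=1..M. real (t m) * Q)"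
    by (intro sum.cong refl trm) 
  also have "\<dots> = real k * Q" unfolding k_def by (simp add: sum_distrib_right)
  also have "\<dots> = - FF a M t"
  proof -
    have f: "fact k = (of_nat k * fact (k - 1) :: real)"
      by (rule fact_reduce) (use k in auto)
    obtain j where j: "k = Suc j" using k by (cases k) auto
    have p: "(-1::real) ^ k = - ((-1) ^ (k - 1))" unfolding j by simp
    show ?thesis unfolding FF_def k_def[symmetric] P_def[symmetric] A_def[symmetric] Q_def f p
      by simp
  qed
  finally show ?thesis by simp
qed



definition TT :: "(nat \<Rightarrow> real) \<Rightarrow> nat \<Rightarrow> real" where
  "TT a n = (\<Sum>t\<in>weighted_compositions n. FF a n t)"

lemma inner_eq:
  assumes m: "m \<in> {1..n}"
  shows "(\<Sum>t\<in>{t\<in>WCb n n. 1 \<le> t m}. FF a n (t(m := t m - 1))) = TT a (n - m)"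
proof -
  have "(\<Sum>t\<in>{t\<in>WCb n n. 1 \<le> t m}. FF a n (t(m := t m - 1))) = (\<Sum>s\<in>WCb n (n-m). FF a n s)"
  proof (rule sum.reindex_bij_witness[where i="\<lambda>s. s(m := s m + 1)" and j="\<lambda>t. t(m := t m - 1)"])
    fix t assume t: "t \<in> {t\<in>WCb n n. 1 \<le> t m}"
    then show "(t(m := t m - 1))(m := (t(m := t m - 1)) m + 1) = t" by auto
    have ws: "(\<Sum>i=1..n. i * (t(m := t m - 1)) i) + m * t m = (\<Sum>i=1..n. i * t i) + m * (t m - 1)"
      by (rule sum_upd[where g="\<lambda>i x. i * x"]) (use m in auto)
    have "m * t m = m * (t m - 1) + m" using t by (cases "t m") auto
    then have "(\<Sum>i=1..n. i * (t(m := t m - 1)) i) = n - m" using ws t by (simp add: WCb_def)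
    then show "t(m := t m - 1) \<in> WCb n (n - m)" using t m by (auto simp: WCb_def)
  next
    fix s assume s: "s \<in> WCb n (n - m)"
    then show "(s(m := s m + 1))(m := (s(m := s m + 1)) m - 1) = s" by auto
    have ws: "(\<Sum>i=1..n. i * (s(m := s m + 1)) i) + m * s m = (\<Sum>i=1..n. i * s i) + m * (s m + 1)"
      by (rule sum_upd[where g="\<lambda>i x. i * x"]) (use m in auto)
    then have "(\<Sum>i=1..n. i * (s(m := s m + 1)) i) = n" using s m by (simp add: WCb_def)
    then show "s(m := s m + 1) \<in> {t\<in>WCb n n. 1 \<le> t m}" using s m by (auto simp: WCb_def)
  qed simp
  also have "\<dots> = (\<Sum>s\<in>weighted_compositions (n-m). FF a n s)" by (simp add: WCb_eq)
  also have "\<dots> = TT a (n - m)" unfolding TT_def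
    by (intro sum.cong refl FF_eq) (auto simp: weighted_compositions_def)
  finally show ?thesis .
qed

lemma TT_rec:
  assumes n: "n \<ge> 1"
  shows "TT a n = - (\<Sum>m=1..n. a m * TT a (n - m))"
proof -
  have "TT a n = (\<Sum>t\<in>WCb n n. FF a n t)" by (simp add: TT_def WCb_eq)
  also have "\<dots> = (\<Sum>t\<in>WCb n n. - (\<Sum>m=1..n. if t m \<ge> 1 then a m * FF a n (t(m := t m - 1)) else 0))"
    by (intro sum.cong refl FF_step) (use n in auto)
  also have "\<dots> = - (\<Sum>m=1..n. \<Sum>t\<in>WCb n n. if t m \<ge> 1 then a m * FF a n (t(m := t m - 1)) else 0)"
    by (simp add: sum_negf sum.swap[of _ "WCb n n"])
  also have "\<dots> = - (\<Sum>m=1..n. a m * TT a (n - m))"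
  proof -
    have "(\<Sum>t\<in>WCb n n. if t m \<ge> 1 then a m * FF a n (t(m := t m - 1)) else 0) = a m * TT a (n - m)"
      if m: "m \<in> {1..n}" for m
    proof -
      have "(\<Sum>t\<in>WCb n n. if t m \<ge> 1 then a m * FF a n (t(m := t m - 1)) else 0)
          = (\<Sum>t\<in>{t\<in>WCb n n. 1 \<le> t m}. a m * FF a n (t(m := t m - 1)))"
        by (rule sum.inter_filter[OF WCb_finite, symmetric])
      also have "\<dots> = a m * TT a (n - m)" by (subst sum_distrib_left[symmetric]) (rule arg_cong[OF inner_eq[OF m]])
      finally show ?thesis .
    qed
    then show ?thesis by simp
  qed
  finally show ?thesis .
qed

lemma TT0: "TT a 0 = 1"
proof -
  have "weighted_compositions 0 = {\<lambda>_. 0}" by (auto simp: weighted_compositions_def)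
  then show ?thesis by (simp add: TT_def FF_def)
qed

lemma comb:
  fixes a c :: "nat \<Rightarrow> real"
  assumes c0: "c 0 = 1" and crec: "\<And>n. n \<ge> 1 \<Longrightarrow> c n = - (\<Sum>m=1..n. a m * c (n - m))"
  shows "c n = TT a n"
proof (induction n rule: less_induct)
  case (less n)
  show ?case
  proof (cases "n = 0")
    case True then show ?thesis using c0 TT0 by simp
  next
    case False
    then have n: "n \<ge> 1" by simp
    have "c n = - (\<Sum>m=1..n. a m * c (n - m))" by (rule crec[OF n])
    also have "\<dots> = - (\<Sum>m=1..n. a m * TT a (n - m))"
      by (intro arg_cong[where f=uminus] sum.cong refl) (use less n in auto)
    also have "\<dots> = TT a n" using TT_rec[OF n] by simp
    finally show ?thesis .
  qed
qed


theorem corollary2: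
  fixes N n :: nat
  assumes "N \<ge> 1" and "n \<ge> 1"
  shows "hbern N n =
           fact n * (\<Sum>t\<in>weighted_compositions n.
              fact (\<Sum>i=1..n. t i) / (\<Prod>i=1..n. fact (t i))
              * (-1) ^ (\<Sum>i=1..n. t i)
              * (\<Prod>i=1..n. (fact N / fact (N + i)) ^ t i))
       \<and> fact N / fact (N + n) =
           det (mat n n (\<lambda>(i, j).
              if j \<le> i then (-1) ^ (i - j + 1) * hbern N (i - j + 1) / fact (i - j + 1)
              else if j = i + 1 then 1 else 0) :: real mat)"
proof
  define c where "c = (\<lambda>k. fps_nth (hbern_fps N) k)"
  have c0: "c 0 = 1" unfolding c_def by (rule g0)
  have a0: "aa N 0 = 1" by (simp add: aa_def)
  have crec0: "(\<Sum>i=0..m. aa N i * c (m - i)) = 0" if "m \<ge> 1" for m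
    unfolding c_def using recur[OF that] .
  have crec: "c m = - (\<Sum>k=1..m. aa N k * c (m - k))" if "m \<ge> 1" for m
  proof -
    have "(\<Sum>i=0..m. aa N i * c (m - i)) = aa N 0 * c (m - 0) + (\<Sum>i=Suc 0..m. aa N i * c (m - i))"
      by (rule sum.atLeast_Suc_atMost) simp
    then show ?thesis using crec0[OF that] a0 by simp
  qed
  have cT: "c n = TT (aa N) n" by (rule comb[OF c0 crec]) simp
  have hc: "hbern N k = fact k * c k" for k by (simp add: hbern_def c_def)
  show "hbern N n =
           fact n * (\<Sum>t\<in>weighted_compositions n.
              fact (\<Sum>i=1..n. t i) / (\<Prod>i=1..n. fact (t i))
              * (-1) ^ (\<Sum>i=1..n. t i)
              * (\<Prod>i=1..n. (fact N / fact (N + i)) ^ t i))"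
    unfolding hc cT TT_def FF_def aa_def ..
  have hb: "hbern N k / fact k = c k" for k by (simp add: hc)
  have "det (mat n n (\<lambda>(i,j). if j \<le> i then (-1)^(i-j+1) * c (i-j+1) else if j = i+1 then 1 else 0)) = aa N n"
  proof (rule hess_det[where b=c and a="aa N", OF c0 a0 _ assms(2)])
    fix m :: nat assume m: "m \<ge> 1"
    have "(\<Sum>k\<le>m. c (m-k) * aa N k) = (\<Sum>i=0..m. aa N i * c (m - i))"
      by (simp add: atLeast0AtMost mult.commute)
    then show "(\<Sum>k\<le>m. c (m-k) * aa N k) = 0" using crec0[OF m] by simp
  qed
  moreover have "mat n n (\<lambda>(i, j).
              if j \<le> i then (-1) ^ (i - j + 1) * hbern N (i - j + 1) / fact (i - j + 1)
              else if j = i + 1 then 1 else 0) = mat n n (\<lambda>(i,j). if j \<le> i then (-1)^(i-j+1) * c (i-j+1) else if j = i+1 then 1 else (0::real))"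
    by (intro cong_mat refl) (simp add: hb[symmetric])
  ultimately show "fact N / fact (N + n) =
           det (mat n n (\<lambda>(i, j).
              if j \<le> i then (-1) ^ (i - j + 1) * hbern N (i - j + 1) / fact (i - j + 1)
              else if j = i + 1 then 1 else 0) :: real mat)"
    by (simp add: aa_def)
qed

end
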